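(* Let $N\ge 1$ and $-\infty<a_i\le b_i<\infty$ with $r_i=(b_i-a_i)/2>0$ for all $i$; set $m_i=(a_i+b_i)/2$, $\Theta=\prod_{i=1}^N[a_i,b_i]$, $T(y)=\sum_{i=1}^N y_i$. Fix a sampling design $p$ with inclusion probabilities $\pi_i=\mathbb P_p(i\in S)>0$ for all $i$, and let $\pi_{ij}=\mathbb P_p(i\in S,\ j\in S)$, $\Delta_{ij}=\pi_{ij}-\pi_i\pi_j$, and $D_\pi=\sum_{i=1}^N r_i^2\frac{1-\pi_i}{\pi_i}$. Let $\widehat T$ be the estimator $\widehat T(y_S)=\sum_{i=1}^N m_i+\sum_{i\in S}\frac{y_i-m_i}{\pi_i}$. The following are equivalent: (i) there exists an unbiased estimator $\delta$ with $\sup_{y\in\Theta}R(\delta,p;y)=D_\pi$; (ii) $\sup_{y\in\Theta}R(\widehat T,p;y)=D_\pi$; (iii) $\Delta_{ij}=0$ for every $i\ne j$.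
   Context: A sampling design is a probability distribution $p$ on the subsets $s\subseteq\{1,\dots,N\}$; $S$ denotes the random sample drawn from $p$, $\mathbb P_p$ and $\mathbb E_p$ denote probability and expectation with respect to $p$. An estimator $\delta$ is a collection of measurable functions $\delta_s:\Theta_s\to\mathbb R$, one for each subset $s$, where $\Theta_s=\prod_{i\in s}[a_i,b_i]$; for $y\in\Theta$ write $y_s=(y_i)_{i\in s}$. The estimator is unbiased if $\mathbb E_p[\delta_S(y_S)]=T(y)$ for all $y\in\Theta$. The risk is $R(\delta,p;y)=\mathbb E_p[(\delta_S(y_S)-T(y))^2]$. *)

theory Defs
  imports "HOL-Probability.Probability"
begin

definition Theta :: "nat \<Rightarrow> (nat \<Rightarrow> real) \<Rightarrow> (nat \<Rightarrow> real) \<Rightarrow> (nat \<Rightarrow> real) set" where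
  "Theta N a b = {y. \<forall>i\<in>{1..N}. a i \<le> y i \<and> y i \<le> b i}"

definition total :: "nat \<Rightarrow> (nat \<Rightarrow> real) \<Rightarrow> real" where
  "total N y = (\<Sum>i=1..N. y i)"

definition sampling_design :: "nat \<Rightarrow> nat set pmf \<Rightarrow> bool" where
  "sampling_design N p \<longleftrightarrow> set_pmf p \<subseteq> Pow {1..N}"

definition incl_prob :: "nat set pmf \<Rightarrow> nat \<Rightarrow> real" where
  "incl_prob p i = measure_pmf.prob p {s. i \<in> s}"

definition joint_incl_prob :: "nat set pmf \<Rightarrow> nat \<Rightarrow> nat \<Rightarrow> real" where
  "joint_incl_prob p i j = measure_pmf.prob p {s. i \<in> s \<and> j \<in> s}"

definition is_estimator ::
  "nat \<Rightarrow> (nat \<Rightarrow> real) \<Rightarrow> (nat \<Rightarrow> real) \<Rightarrow> (nat set \<Rightarrow> (nat \<Rightarrow> real) \<Rightarrow> real) \<Rightarrow> bool" where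
  "is_estimator N a b \<delta> \<longleftrightarrow>
     (\<forall>s. s \<subseteq> {1..N} \<longrightarrow>
        (\<forall>y y'. (\<forall>i\<in>s. y i = y' i) \<longrightarrow> \<delta> s y = \<delta> s y') \<and>
        \<delta> s \<in> borel_measurable
          (restrict_space (PiM s (\<lambda>_. borel)) (PiE s (\<lambda>i. {a i..b i}))))"

definition unbiased ::
  "nat \<Rightarrow> (nat \<Rightarrow> real) \<Rightarrow> (nat \<Rightarrow> real) \<Rightarrow> nat set pmf \<Rightarrow> (nat set \<Rightarrow> (nat \<Rightarrow> real) \<Rightarrow> real) \<Rightarrow> bool" where
  "unbiased N a b p \<delta> \<longleftrightarrow>
     (\<forall>y\<in>Theta N a b. measure_pmf.expectation p (\<lambda>S. \<delta> S y) = total N y)"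

definition risk ::
  "nat \<Rightarrow> (nat set \<Rightarrow> (nat \<Rightarrow> real) \<Rightarrow> real) \<Rightarrow> nat set pmf \<Rightarrow> (nat \<Rightarrow> real) \<Rightarrow> real" where
  "risk N \<delta> p y = measure_pmf.expectation p (\<lambda>S. (\<delta> S y - total N y)\<^sup>2)"

text \<open>Supremum of the risk over Theta, taken in the extended reals (so it is meaningful even
  if the risk were unbounded).\<close>
definition max_risk ::
  "nat \<Rightarrow> (nat \<Rightarrow> real) \<Rightarrow> (nat \<Rightarrow> real) \<Rightarrow> (nat set \<Rightarrow> (nat \<Rightarrow> real) \<Rightarrow> real) \<Rightarrow> nat set pmf \<Rightarrow> ereal" where
  "max_risk N a b \<delta> p = (SUP y\<in>Theta N a b. ereal (risk N \<delta> p y))"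

definition HT_mid ::
  "nat \<Rightarrow> (nat \<Rightarrow> real) \<Rightarrow> (nat \<Rightarrow> real) \<Rightarrow> nat set pmf \<Rightarrow> nat set \<Rightarrow> (nat \<Rightarrow> real) \<Rightarrow> real" where
  "HT_mid N a b p s y =
     (\<Sum>i=1..N. (a i + b i) / 2) + (\<Sum>i\<in>s. (y i - (a i + b i) / 2) / incl_prob p i)"

definition D_pi :: "nat \<Rightarrow> (nat \<Rightarrow> real) \<Rightarrow> (nat \<Rightarrow> real) \<Rightarrow> nat set pmf \<Rightarrow> real" where
  "D_pi N a b p = (\<Sum>i=1..N. ((b i - a i) / 2)\<^sup>2 * (1 - incl_prob p i) / incl_prob p i)"

end

theory Submission
  imports Defs
begin


definition flip :: "nat \<Rightarrow> (nat \<Rightarrow> real) \<Rightarrow> nat \<Rightarrow> real" where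
  "flip k \<sigma> = \<sigma>(k := - \<sigma> k)"

abbreviation SV :: "nat set \<Rightarrow> (nat \<Rightarrow> real) set" where
  "SV K \<equiv> PiE K (\<lambda>_. {-1, 1})"

lemma flip_in: "k \<in> K \<Longrightarrow> \<sigma> \<in> SV K \<Longrightarrow> flip k \<sigma> \<in> SV K"
  unfolding flip_def by (auto simp: PiE_iff extensional_def)

lemma flip_flip: "flip k (flip k \<sigma>) = \<sigma>"
  unfolding flip_def by auto

lemma flip_sum:
  assumes "k \<in> K"
  shows "(\<Sum>\<sigma>\<in>SV K. g \<sigma>) = (\<Sum>\<sigma>\<in>SV K. g (flip k \<sigma>))"
  by (rule sum.reindex_bij_witness[where i="flip k" and j="flip k"])
     (auto simp: flip_flip flip_in assms)

lemma sign_zero: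
  assumes "k \<in> K" "\<And>\<sigma>. \<sigma> \<in> SV K \<Longrightarrow> f (flip k \<sigma>) = f \<sigma>"
  shows "(\<Sum>\<sigma>\<in>SV K. \<sigma> k * f \<sigma>) = 0"
proof -
  have "(\<Sum>\<sigma>\<in>SV K. \<sigma> k * f \<sigma>) = (\<Sum>\<sigma>\<in>SV K. flip k \<sigma> k * f (flip k \<sigma>))"
    by (rule flip_sum[OF assms(1)])
  also have "\<dots> = (\<Sum>\<sigma>\<in>SV K. - (\<sigma> k * f \<sigma>))"
  proof (rule sum.cong)
    fix \<sigma> assume "\<sigma> \<in> SV K"
    then show "flip k \<sigma> k * f (flip k \<sigma>) = - (\<sigma> k * f \<sigma>)"
      using assms(2)[of \<sigma>] by (simp add: flip_def)
  qed simp
  finally show ?thesis by (simp add: sum_negf)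
qed

lemma sq_sign: "\<sigma> \<in> SV K \<Longrightarrow> k \<in> K \<Longrightarrow> \<sigma> k * \<sigma> k = 1"
  by (auto simp: PiE_iff)

lemma sum_sign: "finite K \<Longrightarrow> k \<in> K \<Longrightarrow> (\<Sum>\<sigma>\<in>SV K. \<sigma> k) = 0"
  using sign_zero[of k K "\<lambda>_. 1"] by simp

lemma sum_sign2: "finite K \<Longrightarrow> k \<in> K \<Longrightarrow> l \<in> K \<Longrightarrow>
   (\<Sum>\<sigma>\<in>SV K. \<sigma> k * \<sigma> l) = (if k = l then real (card (SV K)) else 0)"
proof (cases "k = l")
  case True
  assume "k \<in> K"
  then show ?thesis using True by (simp add: sq_sign)
next
  case False
  assume "k \<in> K" "l \<in> K"
  then show ?thesis using False sign_zero[of k K "\<lambda>\<sigma>. \<sigma> l"] by (simp add: flip_def)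
qed

lemma sum_sign_lin: assumes "finite K" "k \<in> K"
  shows "(\<Sum>\<sigma>\<in>SV K. \<sigma> k * (\<Sum>l\<in>K. \<sigma> l * a l)) = real (card (SV K)) * a k"
proof -
  have "(\<Sum>\<sigma>\<in>SV K. \<sigma> k * (\<Sum>l\<in>K. \<sigma> l * a l)) = (\<Sum>l\<in>K. a l * (\<Sum>\<sigma>\<in>SV K. \<sigma> k * \<sigma> l))"
    by (simp add: sum_distrib_left sum_distrib_right mult_ac sum.swap[of _ "SV K"])
  also have "\<dots> = (\<Sum>l\<in>K. if l = k then a k * real (card (SV K)) else 0)"
    by (rule sum.cong) (auto simp: sum_sign2 assms)
  finally show ?thesis using assms by simp
qed

lemma sum_sign_quad: assumes "finite K"
  shows "(\<Sum>\<sigma>\<in>SV K. (\<Sum>l\<in>K. \<sigma> l * a l)^2) = real (card (SV K)) * (\<Sum>l\<in>K. (a l)^2)"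
proof -
  have "(\<Sum>\<sigma>\<in>SV K. (\<Sum>l\<in>K. \<sigma> l * a l)^2) = (\<Sum>\<sigma>\<in>SV K. \<Sum>k\<in>K. a k * (\<sigma> k * (\<Sum>l\<in>K. \<sigma> l * a l)))"
    by (simp add: power2_eq_square sum_distrib_left sum_distrib_right mult_ac)
  also have "\<dots> = (\<Sum>k\<in>K. a k * (\<Sum>\<sigma>\<in>SV K. \<sigma> k * (\<Sum>l\<in>K. \<sigma> l * a l)))"
    by (simp add: sum.swap[of _ "SV K"] sum_distrib_left)
  also have "\<dots> = (\<Sum>k\<in>K. a k * (real (card (SV K)) * a k))"
    by (rule sum.cong) (auto simp: sum_sign_lin assms)
  finally show ?thesis by (simp add: sum_distrib_left sum_distrib_right power2_eq_square mult_ac)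
qed

lemma core:
  fixes K :: "nat set" and P :: "nat set set" and w :: "nat set \<Rightarrow> real" and \<pi> r :: "nat \<Rightarrow> real"
    and d :: "nat set \<Rightarrow> (nat \<Rightarrow> real) \<Rightarrow> real" and c :: real
  assumes fK: "finite K" and fP: "finite P"
    and w0: "\<And>S. w S \<ge> 0" and w1: "(\<Sum>S\<in>P. w S) = 1"
    and pi: "\<And>k. k \<in> K \<Longrightarrow> \<pi> k = (\<Sum>S\<in>P. w S * (if k \<in> S then 1 else 0))"
    and pipos: "\<And>k. k \<in> K \<Longrightarrow> \<pi> k > 0" and rpos: "\<And>k. k \<in> K \<Longrightarrow> r k > 0"
    and unb: "\<And>\<sigma>. \<sigma> \<in> SV K \<Longrightarrow> (\<Sum>S\<in>P. w S * d S \<sigma>) = c + (\<Sum>k\<in>K. \<sigma> k * r k)"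
    and loc: "\<And>S \<sigma> k. S \<in> P \<Longrightarrow> \<sigma> \<in> SV K \<Longrightarrow> k \<in> K \<Longrightarrow> k \<notin> S \<Longrightarrow> d S (flip k \<sigma>) = d S \<sigma>"
    and rsk: "\<And>\<sigma>. \<sigma> \<in> SV K \<Longrightarrow> (\<Sum>S\<in>P. w S * (d S \<sigma> - (c + (\<Sum>k\<in>K. \<sigma> k * r k)))\<^sup>2)
               \<le> (\<Sum>k\<in>K. (r k)\<^sup>2 * (1 - \<pi> k) / \<pi> k)"
    and ij: "i \<in> K" "j \<in> K" "i \<noteq> j"
  shows "(\<Sum>S\<in>P. w S * ((if i \<in> S then 1 else 0) * (if j \<in> S then 1 else 0))) = \<pi> i * \<pi> j"
proof -
  define u where "u k S = (if k \<in> S then 1 / \<pi> k else 0) - 1" for k S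
  define H where "H \<sigma> S = (\<Sum>k\<in>K. \<sigma> k * (r k * u k S))" for \<sigma> S
  define F where "F \<sigma> S = d S \<sigma> - (c + (\<Sum>k\<in>K. \<sigma> k * r k))" for \<sigma> S
  define D where "D = (\<Sum>k\<in>K. (r k)\<^sup>2 * (1 - \<pi> k) / \<pi> k)"
  define n where "n = real (card (SV K))"
  have npos: "n > 0" unfolding n_def using fK by (simp add: card_PiE)
  have Eu: "(\<Sum>S\<in>P. w S * u k S) = 0" if k: "k \<in> K" for k
  proof -
    have "(\<Sum>S\<in>P. w S * u k S) = (\<Sum>S\<in>P. (w S * (if k \<in> S then 1 else 0)) / \<pi> k - w S)"
      by (rule sum.cong) (auto simp: u_def right_diff_distrib)
    also have "\<dots> = \<pi> k / \<pi> k - 1"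
      by (simp add: sum_subtractf sum_divide_distrib[symmetric] pi[OF k] w1)
    finally show ?thesis using pipos[OF k] by simp
  qed
  have Euu: "(\<Sum>S\<in>P. w S * (u k S)\<^sup>2) = 1 / \<pi> k - 1" if k: "k \<in> K" for k
  proof -
    have "(\<Sum>S\<in>P. w S * (u k S)\<^sup>2) = (\<Sum>S\<in>P. (w S * (if k \<in> S then 1 else 0)) * (1 / (\<pi> k)\<^sup>2 - 2 / \<pi> k) + w S)"
      by (rule sum.cong) (auto simp: u_def power2_eq_square field_simps)
    also have "\<dots> = \<pi> k * (1 / (\<pi> k)\<^sup>2 - 2 / \<pi> k) + 1"
      by (simp add: sum.distrib sum_distrib_right[symmetric] pi[OF k] w1)
    also have "\<dots> = 1 / \<pi> k - 1" using pipos[OF k] by (simp add: power2_eq_square field_simps)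
    finally show ?thesis .
  qed
  have EuG: "(\<Sum>S\<in>P. w S * (u k S * g S)) = (\<Sum>S\<in>P. w S * g S) / \<pi> k - (\<Sum>S\<in>P. w S * g S)"
    if k: "k \<in> K" and g: "\<And>S. S \<in> P \<Longrightarrow> k \<notin> S \<Longrightarrow> g S = 0" for k g
  proof -
    have "(\<Sum>S\<in>P. w S * (u k S * g S)) = (\<Sum>S\<in>P. w S * g S / \<pi> k - w S * g S)"
      by (rule sum.cong) (auto simp: u_def g field_simps)
    then show ?thesis by (simp add: sum_subtractf sum_divide_distrib)
  qed
  have Euu2: "(\<Sum>S\<in>P. w S * (u i S * u j S)) =
      (\<Sum>S\<in>P. w S * ((if i \<in> S then 1 else 0) * (if j \<in> S then 1 else 0))) / (\<pi> i * \<pi> j) - 1"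
  proof -
    have "(\<Sum>S\<in>P. w S * (u i S * u j S)) = (\<Sum>S\<in>P. w S * ((if i \<in> S then 1 else 0) * (if j \<in> S then 1 else 0)) / (\<pi> i * \<pi> j)
        - (w S * (if i \<in> S then 1 else 0)) / \<pi> i - (w S * (if j \<in> S then 1 else 0)) / \<pi> j + w S)"
      by (rule sum.cong) (auto simp: u_def field_simps)
    also have "\<dots> = (\<Sum>S\<in>P. w S * ((if i \<in> S then 1 else 0) * (if j \<in> S then 1 else 0))) / (\<pi> i * \<pi> j)
        - \<pi> i / \<pi> i - \<pi> j / \<pi> j + 1"
      by (simp add: sum.distrib sum_subtractf sum_divide_distrib[symmetric] pi ij w1)
    finally show ?thesis using pipos[OF ij(1)] pipos[OF ij(2)] by simp
  qed
  have Dalt: "D = (\<Sum>k\<in>K. (r k)\<^sup>2 * (1 / \<pi> k - 1))"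
    unfolding D_def by (rule sum.cong) (auto simp: field_simps dest: pipos)
  have SH: "(\<Sum>\<sigma>\<in>SV K. \<Sum>S\<in>P. w S * (H \<sigma> S)\<^sup>2) = n * D"
  proof -
    have "(\<Sum>\<sigma>\<in>SV K. \<Sum>S\<in>P. w S * (H \<sigma> S)\<^sup>2) = (\<Sum>S\<in>P. \<Sum>\<sigma>\<in>SV K. w S * (H \<sigma> S)\<^sup>2)"
      by (rule sum.swap)
    also have "\<dots> = (\<Sum>S\<in>P. w S * (\<Sum>\<sigma>\<in>SV K. (H \<sigma> S)\<^sup>2))"
      by (simp add: sum_distrib_left)
    also have "\<dots> = (\<Sum>S\<in>P. w S * (n * (\<Sum>k\<in>K. (r k * u k S)\<^sup>2)))"
      unfolding H_def n_def by (simp add: sum_sign_quad[OF fK])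
    also have "\<dots> = n * (\<Sum>S\<in>P. \<Sum>k\<in>K. (r k)\<^sup>2 * (w S * (u k S)\<^sup>2))"
      by (simp add: sum_distrib_left power_mult_distrib mult_ac)
    also have "\<dots> = n * (\<Sum>k\<in>K. \<Sum>S\<in>P. (r k)\<^sup>2 * (w S * (u k S)\<^sup>2))"
      by (simp add: sum.swap[of _ P])
    also have "\<dots> = n * (\<Sum>k\<in>K. (r k)\<^sup>2 * (\<Sum>S\<in>P. w S * (u k S)\<^sup>2))"
      by (simp add: sum_distrib_left)
    also have "\<dots> = n * D" unfolding Dalt
      by (rule arg_cong[where f="\<lambda>x. n * x"], rule sum.cong) (auto simp: Euu)
    finally show ?thesis .
  qed
  define G where "G k S = (\<Sum>\<sigma>\<in>SV K. \<sigma> k * d S \<sigma>)" for k S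
  have G0: "G k S = 0" if "S \<in> P" "k \<in> K" "k \<notin> S" for k S
    unfolding G_def by (rule sign_zero) (use that loc in auto)
  have EG: "(\<Sum>S\<in>P. w S * G k S) = n * r k" if k: "k \<in> K" for k
  proof -
    have "(\<Sum>S\<in>P. w S * G k S) = (\<Sum>\<sigma>\<in>SV K. \<sigma> k * (\<Sum>S\<in>P. w S * d S \<sigma>))"
      unfolding G_def by (simp add: sum_distrib_left sum.swap[of _ P] mult_ac)
    also have "\<dots> = (\<Sum>\<sigma>\<in>SV K. c * \<sigma> k + \<sigma> k * (\<Sum>l\<in>K. \<sigma> l * r l))"
      by (rule sum.cong) (auto simp: unb algebra_simps)
    also have "\<dots> = n * r k"
      by (simp add: sum.distrib sum_distrib_left[symmetric] sum_sign[OF fK k] sum_sign_lin[OF fK k] n_def)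
    finally show ?thesis .
  qed
  have SF: "(\<Sum>\<sigma>\<in>SV K. \<sigma> k * F \<sigma> S) = G k S - n * r k" if k: "k \<in> K" for k S
  proof -
    have "(\<Sum>\<sigma>\<in>SV K. \<sigma> k * F \<sigma> S) = (\<Sum>\<sigma>\<in>SV K. \<sigma> k * d S \<sigma> - c * \<sigma> k - \<sigma> k * (\<Sum>l\<in>K. \<sigma> l * r l))"
      by (rule sum.cong) (auto simp: F_def algebra_simps)
    also have "\<dots> = G k S - n * r k"
      by (simp add: sum_subtractf sum_distrib_left[symmetric] sum_sign[OF fK k] sum_sign_lin[OF fK k] n_def G_def)
    finally show ?thesis .
  qed
  have SFH: "(\<Sum>\<sigma>\<in>SV K. \<Sum>S\<in>P. w S * (F \<sigma> S * H \<sigma> S)) = n * D"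
  proof -
    have "(\<Sum>\<sigma>\<in>SV K. \<Sum>S\<in>P. w S * (F \<sigma> S * H \<sigma> S))
        = (\<Sum>\<sigma>\<in>SV K. \<Sum>S\<in>P. \<Sum>k\<in>K. w S * (r k * u k S) * (\<sigma> k * F \<sigma> S))"
      by (simp add: H_def sum_distrib_left mult_ac)
    also have "\<dots> = (\<Sum>S\<in>P. \<Sum>\<sigma>\<in>SV K. \<Sum>k\<in>K. w S * (r k * u k S) * (\<sigma> k * F \<sigma> S))"
      by (rule sum.swap)
    also have "\<dots> = (\<Sum>S\<in>P. \<Sum>k\<in>K. \<Sum>\<sigma>\<in>SV K. w S * (r k * u k S) * (\<sigma> k * F \<sigma> S))"
      by (rule sum.cong[OF refl], rule sum.swap)
    also have "\<dots> = (\<Sum>S\<in>P. \<Sum>k\<in>K. w S * (r k * u k S) * (G k S - n * r k))"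
      by (rule sum.cong[OF refl], rule sum.cong[OF refl]) (simp add: sum_distrib_left[symmetric] SF)
    also have "\<dots> = (\<Sum>k\<in>K. \<Sum>S\<in>P. r k * (w S * (u k S * G k S)) - n * (r k)\<^sup>2 * (w S * u k S))"
      by (subst sum.swap) (simp add: algebra_simps power2_eq_square)
    also have "\<dots> = (\<Sum>k\<in>K. r k * (\<Sum>S\<in>P. w S * (u k S * G k S)) - n * (r k)\<^sup>2 * (\<Sum>S\<in>P. w S * u k S))"
      by (simp add: sum_subtractf sum_distrib_left)
    also have "\<dots> = (\<Sum>k\<in>K. r k * (n * r k / \<pi> k - n * r k))"
      by (rule sum.cong[OF refl]) (simp add: EuG G0 EG Eu)
    also have "\<dots> = n * D" unfolding Dalt
      by (simp add: sum_distrib_left algebra_simps power2_eq_square)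
    finally show ?thesis .
  qed
  have SF2: "(\<Sum>\<sigma>\<in>SV K. \<Sum>S\<in>P. w S * (F \<sigma> S)\<^sup>2) \<le> n * D"
    unfolding n_def by (rule sum_bounded_above) (use rsk in \<open>simp add: F_def D_def\<close>)
  have Sdiff: "(\<Sum>\<sigma>\<in>SV K. \<Sum>S\<in>P. w S * (F \<sigma> S - H \<sigma> S)\<^sup>2) =
      (\<Sum>\<sigma>\<in>SV K. \<Sum>S\<in>P. w S * (F \<sigma> S)\<^sup>2) - 2 * (\<Sum>\<sigma>\<in>SV K. \<Sum>S\<in>P. w S * (F \<sigma> S * H \<sigma> S))
      + (\<Sum>\<sigma>\<in>SV K. \<Sum>S\<in>P. w S * (H \<sigma> S)\<^sup>2)"
    by (simp add: power2_diff algebra_simps sum.distrib sum_subtractf sum_distrib_left)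
  have nn: "\<And>\<sigma> S. 0 \<le> w S * (F \<sigma> S - H \<sigma> S)\<^sup>2" using w0 by simp
  have "(\<Sum>\<sigma>\<in>SV K. \<Sum>S\<in>P. w S * (F \<sigma> S - H \<sigma> S)\<^sup>2) \<le> 0"
    using Sdiff SF2 SFH SH by linarith
  moreover have "(\<Sum>\<sigma>\<in>SV K. \<Sum>S\<in>P. w S * (F \<sigma> S - H \<sigma> S)\<^sup>2) \<ge> 0"
    by (intro sum_nonneg nn)
  ultimately have "(\<Sum>\<sigma>\<in>SV K. \<Sum>S\<in>P. w S * (F \<sigma> S - H \<sigma> S)\<^sup>2) = 0" by linarith
  then have z: "\<forall>\<sigma>\<in>SV K. (\<Sum>S\<in>P. w S * (F \<sigma> S - H \<sigma> S)\<^sup>2) = 0"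
    using fK by (subst (asm) sum_nonneg_eq_0_iff) (auto intro: sum_nonneg nn simp: finite_PiE)
  have FH: "w S * (F \<sigma> S)\<^sup>2 = w S * (H \<sigma> S)\<^sup>2" if "\<sigma> \<in> SV K" "S \<in> P" for \<sigma> S
  proof -
    have "w S * (F \<sigma> S - H \<sigma> S)\<^sup>2 = 0"
      using z that fP by (subst (asm) sum_nonneg_eq_0_iff) (auto intro: nn)
    then show ?thesis by auto
  qed
  define R where "R \<sigma> = (\<Sum>S\<in>P. w S * (H \<sigma> S)\<^sup>2)" for \<sigma>
  have Rle: "R \<sigma> \<le> D" if "\<sigma> \<in> SV K" for \<sigma>
  proof -
    have "R \<sigma> = (\<Sum>S\<in>P. w S * (F \<sigma> S)\<^sup>2)" unfolding R_def
      by (rule sum.cong) (auto simp: FH that)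
    then show ?thesis using rsk[OF that] by (simp add: F_def D_def)
  qed
  have "(\<Sum>\<sigma>\<in>SV K. D - R \<sigma>) = 0"
    using SH by (simp add: sum_subtractf R_def n_def)
  then have RD: "R \<sigma> = D" if "\<sigma> \<in> SV K" for \<sigma>
    using that Rle fK by (subst (asm) sum_nonneg_eq_0_iff) (auto simp: finite_PiE)
  have Hflip: "H (flip k \<sigma>) S = H \<sigma> S - 2 * \<sigma> k * (r k * u k S)" if k: "k \<in> K" for k \<sigma> S
  proof -
    have "H (flip k \<sigma>) S = flip k \<sigma> k * (r k * u k S) + (\<Sum>l\<in>K-{k}. flip k \<sigma> l * (r l * u l S))"
      unfolding H_def by (rule sum.remove[OF fK k])
    also have "(\<Sum>l\<in>K-{k}. flip k \<sigma> l * (r l * u l S)) = (\<Sum>l\<in>K-{k}. \<sigma> l * (r l * u l S))"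
      by (rule sum.cong) (auto simp: flip_def)
    also have "H \<sigma> S = \<sigma> k * (r k * u k S) + (\<Sum>l\<in>K-{k}. \<sigma> l * (r l * u l S))"
      unfolding H_def by (rule sum.remove[OF fK k])
    moreover have "flip k \<sigma> k = - \<sigma> k" by (simp add: flip_def)
    ultimately show ?thesis by simp
  qed
  define L where "L \<sigma> = (\<Sum>S\<in>P. w S * (H \<sigma> S * u i S))" for \<sigma>
  have Lform: "L \<sigma> = \<sigma> i * r i * (1 / \<pi> i - 1)" if s: "\<sigma> \<in> SV K" for \<sigma>
  proof -
    have s2: "\<sigma> i * \<sigma> i = 1" using sq_sign[OF s ij(1)] .
    have "R (flip i \<sigma>) = (\<Sum>S\<in>P. w S * (H \<sigma> S)\<^sup>2 - 4 * \<sigma> i * r i * (w S * (H \<sigma> S * u i S))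
          + 4 * (\<sigma> i * \<sigma> i) * (r i)\<^sup>2 * (w S * (u i S)\<^sup>2))"
      unfolding R_def by (rule sum.cong) (auto simp: Hflip ij power2_eq_square algebra_simps)
    also have "\<dots> = R \<sigma> - 4 * \<sigma> i * r i * L \<sigma> + 4 * (r i)\<^sup>2 * (1 / \<pi> i - 1)"
      by (simp add: s2 sum.distrib sum_subtractf sum_distrib_left[symmetric] R_def L_def Euu ij)
    finally have "R (flip i \<sigma>) = R \<sigma> - 4 * \<sigma> i * r i * L \<sigma> + 4 * (r i)\<^sup>2 * (1 / \<pi> i - 1)" .
    moreover have "R (flip i \<sigma>) = D" by (rule RD[OF flip_in[OF ij(1) s]])
    moreover have "R \<sigma> = D" by (rule RD[OF s])
    ultimately have "4 * (r i * (\<sigma> i * L \<sigma>)) = 4 * (r i * (r i * (1 / \<pi> i - 1)))"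
      by (simp add: power2_eq_square algebra_simps)
    then have "r i * (\<sigma> i * L \<sigma>) = r i * (r i * (1 / \<pi> i - 1))" by simp
    then have "\<sigma> i * L \<sigma> = r i * (1 / \<pi> i - 1)" using rpos[OF ij(1)] by simp
    then have "\<sigma> i * (\<sigma> i * L \<sigma>) = \<sigma> i * (r i * (1 / \<pi> i - 1))" by simp
    then show ?thesis by (simp add: mult.assoc[symmetric] s2)
  qed
  define \<sigma>0 where "\<sigma>0 = restrict (\<lambda>_. 1::real) K"
  have s0: "\<sigma>0 \<in> SV K" unfolding \<sigma>0_def by auto
  have s1: "flip j \<sigma>0 \<in> SV K" by (rule flip_in[OF ij(2) s0])
  have "L (flip j \<sigma>0) = L \<sigma>0 - 2 * \<sigma>0 j * r j * (\<Sum>S\<in>P. w S * (u i S * u j S))"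
    unfolding L_def by (simp add: Hflip ij algebra_simps sum_subtractf sum_distrib_left)
  moreover have "L (flip j \<sigma>0) = L \<sigma>0"
    using Lform[OF s0] Lform[OF s1] ij by (simp add: flip_def)
  moreover have "\<sigma>0 j = 1" using ij unfolding \<sigma>0_def by simp
  ultimately have "r j * (\<Sum>S\<in>P. w S * (u i S * u j S)) = 0" by simp
  then have "(\<Sum>S\<in>P. w S * (u i S * u j S)) = 0" using rpos[OF ij(2)] by simp
  then show ?thesis using Euu2 pipos[OF ij(1)] pipos[OF ij(2)] by (simp add: field_simps)
qed



definition uu :: "(nat \<Rightarrow> real) \<Rightarrow> nat \<Rightarrow> nat set \<Rightarrow> real" where
  "uu q k S = (if k \<in> S then 1 / q k else 0) - 1"

lemma Euu2_gen:
  fixes P :: "nat set set" and w :: "nat set \<Rightarrow> real"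
  assumes w1: "(\<Sum>S\<in>P. w S) = 1"
    and pi: "\<And>k. q k = (\<Sum>S\<in>P. w S * (if k \<in> S then 1 else 0))"
    and pos: "q i > 0" "q j > 0"
  shows "(\<Sum>S\<in>P. w S * (uu q i S * uu q j S)) =
      (\<Sum>S\<in>P. w S * ((if i \<in> S then 1 else 0) * (if j \<in> S then 1 else 0))) / (q i * q j) - 1"
proof -
  have "(\<Sum>S\<in>P. w S * (uu q i S * uu q j S)) = (\<Sum>S\<in>P. w S * ((if i \<in> S then 1 else 0) * (if j \<in> S then 1 else 0)) / (q i * q j)
      - (w S * (if i \<in> S then 1 else 0)) / q i - (w S * (if j \<in> S then 1 else 0)) / q j + w S)"
    by (rule sum.cong) (auto simp: uu_def field_simps)
  also have "\<dots> = (\<Sum>S\<in>P. w S * ((if i \<in> S then 1 else 0) * (if j \<in> S then 1 else 0))) / (q i * q j)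
      - q i / q i - q j / q j + 1"
    by (simp add: sum.distrib sum_subtractf sum_divide_distrib[symmetric] pi[symmetric] w1)
  finally show ?thesis using pos by simp
qed

lemma Eu_gen:
  fixes P :: "nat set set" and w :: "nat set \<Rightarrow> real"
  assumes w1: "(\<Sum>S\<in>P. w S) = 1"
    and pi: "\<And>k. q k = (\<Sum>S\<in>P. w S * (if k \<in> S then 1 else 0))"
    and pos: "q k > 0"
  shows "(\<Sum>S\<in>P. w S * uu q k S) = 0"
proof -
  have "(\<Sum>S\<in>P. w S * uu q k S) = (\<Sum>S\<in>P. (w S * (if k \<in> S then 1 else 0)) / q k - w S)"
    by (rule sum.cong) (auto simp: uu_def right_diff_distrib)
  also have "\<dots> = q k / q k - 1"
    by (simp add: sum_subtractf sum_divide_distrib[symmetric] pi[symmetric] w1)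
  finally show ?thesis using pos by simp
qed

lemma quad_exp:
  fixes w :: "nat set \<Rightarrow> real"
  shows "(\<Sum>S\<in>P. w S * (\<Sum>k\<in>K. z k * v k S)\<^sup>2) = (\<Sum>k\<in>K. \<Sum>l\<in>K. z k * z l * (\<Sum>S\<in>P. w S * (v k S * v l S)))"
proof -
  have "(\<Sum>S\<in>P. w S * (\<Sum>k\<in>K. z k * v k S)\<^sup>2) = (\<Sum>S\<in>P. \<Sum>k\<in>K. \<Sum>l\<in>K. z k * z l * (w S * (v k S * v l S)))"
    by (simp add: power2_eq_square sum_product sum_distrib_left mult_ac)
  also have "\<dots> = (\<Sum>k\<in>K. \<Sum>S\<in>P. \<Sum>l\<in>K. z k * z l * (w S * (v k S * v l S)))"
    by (rule sum.swap)
  also have "\<dots> = (\<Sum>k\<in>K. \<Sum>l\<in>K. \<Sum>S\<in>P. z k * z l * (w S * (v k S * v l S)))"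
    by (rule sum.cong[OF refl], rule sum.swap)
  finally show ?thesis by (simp add: sum_distrib_left)
qed

lemma E_fin:
  assumes "sampling_design N p"
  shows "measure_pmf.expectation p f = (\<Sum>S\<in>Pow {1..N}. pmf p S * f S)"
  using integral_measure_pmf_real[of "Pow {1..N}" p f] assms
  unfolding sampling_design_def by (auto simp: mult.commute)

lemma prob_fin:
  assumes "sampling_design N p"
  shows "measure_pmf.prob p A = (\<Sum>S\<in>Pow {1..N}. pmf p S * (if S \<in> A then 1 else 0))"
proof -
  have "measure_pmf.prob p A = measure_pmf.expectation p (indicator A :: _ \<Rightarrow> real)" by simp
  also have "\<dots> = (\<Sum>S\<in>Pow {1..N}. pmf p S * (if S \<in> A then 1 else 0))"
    by (subst E_fin[OF assms], rule sum.cong) (auto simp: indicator_def)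
  finally show ?thesis .
qed

lemma incl_fin:
  assumes "sampling_design N p"
  shows "incl_prob p k = (\<Sum>S\<in>Pow {1..N}. pmf p S * (if k \<in> S then 1 else 0))"
  unfolding incl_prob_def prob_fin[OF assms] by simp

lemma joint_fin:
  assumes "sampling_design N p"
  shows "joint_incl_prob p i j = (\<Sum>S\<in>Pow {1..N}. pmf p S * ((if i \<in> S then 1 else 0) * (if j \<in> S then 1 else 0)))"
  unfolding joint_incl_prob_def prob_fin[OF assms] by (rule sum.cong) auto

lemma HT_err:
  assumes "S \<subseteq> {1..N}"
  shows "HT_mid N a b p S y - total N y =
    (\<Sum>k\<in>{1..N}. (y k - (a k + b k) / 2) * uu (incl_prob p) k S)"
proof -
  have "(\<Sum>i\<in>S. (y i - (a i + b i) / 2) / incl_prob p i) =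
      (\<Sum>i\<in>{1..N}. if i \<in> S then (y i - (a i + b i) / 2) / incl_prob p i else 0)"
    using assms by (simp add: sum.If_cases Int_absorb1 Int_absorb2)
  moreover have "(\<Sum>k\<in>{1..N}. (y k - (a k + b k) / 2) * uu (incl_prob p) k S) =
      (\<Sum>i\<in>{1..N}. if i \<in> S then (y i - (a i + b i) / 2) / incl_prob p i else 0)
      - (\<Sum>k\<in>{1..N}. y k) + (\<Sum>k\<in>{1..N}. (a k + b k) / 2)"
  proof -
    have "(\<Sum>k\<in>{1..N}. (y k - (a k + b k) / 2) * uu (incl_prob p) k S) =
      (\<Sum>k\<in>{1..N}. (if k \<in> S then (y k - (a k + b k) / 2) / incl_prob p k else 0) - y k + (a k + b k) / 2)"
      by (rule sum.cong) (auto simp: uu_def algebra_simps diff_divide_distrib add_divide_distrib)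
    then show ?thesis by (simp add: sum_subtractf sum.distrib)
  qed
  ultimately show ?thesis unfolding HT_mid_def total_def by simp
qed

theorem theorem2:
  fixes N :: nat and a b :: "nat \<Rightarrow> real" and p :: "nat set pmf"
  assumes "N \<ge> 1"
    and "\<And>i. i \<in> {1..N} \<Longrightarrow> a i \<le> b i"
    and "\<And>i. i \<in> {1..N} \<Longrightarrow> (b i - a i) / 2 > 0"
    and "sampling_design N p"
    and "\<And>i. i \<in> {1..N} \<Longrightarrow> incl_prob p i > 0"
  shows "((\<exists>\<delta>. is_estimator N a b \<delta> \<and> unbiased N a b p \<delta> \<and>
              max_risk N a b \<delta> p = ereal (D_pi N a b p))
          \<longleftrightarrow> max_risk N a b (HT_mid N a b p) p = ereal (D_pi N a b p))
       \<and> (max_risk N a b (HT_mid N a b p) p = ereal (D_pi N a b p)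
          \<longleftrightarrow> (\<forall>i\<in>{1..N}. \<forall>j\<in>{1..N}. i \<noteq> j \<longrightarrow>
                 joint_incl_prob p i j - incl_prob p i * incl_prob p j = 0))"
proof -
  note sd = assms(4)
  define K where "K = {1..N}"
  define P where "P = Pow K"
  define w where "w = pmf p"
  define q where "q = incl_prob p"
  define m where "m k = (a k + b k) / 2" for k
  define r where "r k = (b k - a k) / 2" for k
  define HT where "HT = HT_mid N a b p"
  define D where "D = D_pi N a b p"
  have fK: "finite K" unfolding K_def by simp
  have fP: "finite P" unfolding P_def K_def by simp
  have w0: "\<And>S. w S \<ge> 0" unfolding w_def by simp
  have w1: "(\<Sum>S\<in>P. w S) = 1" unfolding w_def P_def K_def
    by (rule sum_pmf_eq_1) (use sd in \<open>auto simp: sampling_design_def\<close>)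
  have Eq: "\<And>f. measure_pmf.expectation p f = (\<Sum>S\<in>P. w S * f S)"
    unfolding P_def w_def K_def by (rule E_fin[OF sd])
  have pi: "\<And>k. q k = (\<Sum>S\<in>P. w S * (if k \<in> S then 1 else 0))"
    unfolding P_def w_def K_def q_def by (rule incl_fin[OF sd])
  have jt: "\<And>i j. joint_incl_prob p i j = (\<Sum>S\<in>P. w S * ((if i \<in> S then 1 else 0) * (if j \<in> S then 1 else 0)))"
    unfolding P_def w_def K_def by (rule joint_fin[OF sd])
  have qpos: "\<And>k. k \<in> K \<Longrightarrow> q k > 0" unfolding q_def K_def using assms(5) by blast
  have rpos: "\<And>k. k \<in> K \<Longrightarrow> r k > 0" unfolding r_def K_def using assms(3) by blast
  have q1: "q k \<le> 1" for k
  proof -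
    have "q k \<le> (\<Sum>S\<in>P. w S)" unfolding pi by (rule sum_mono) (use w0 in auto)
    then show ?thesis using w1 by simp
  qed
  have Ddef: "D = (\<Sum>k\<in>K. (r k)\<^sup>2 * (1 - q k) / q k)"
    unfolding D_def D_pi_def r_def q_def K_def ..
  have Dalt: "D = (\<Sum>k\<in>K. (r k)\<^sup>2 * (1 / q k - 1))"
    unfolding Ddef by (rule sum.cong) (auto simp: field_simps dest: qpos)
  have HTe: "HT S y = total N y + (\<Sum>k\<in>K. (y k - m k) * uu q k S)" if "S \<in> P" for S y
  proof -
    have "S \<subseteq> {1..N}" using that by (simp add: P_def K_def)
    from HT_err[OF this, of a b p y] show ?thesis
      unfolding HT_def K_def m_def q_def by (simp add: algebra_simps)
  qed
  have riskHT: "risk N HT p y = (\<Sum>S\<in>P. w S * (\<Sum>k\<in>K. (y k - m k) * uu q k S)\<^sup>2)" for y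
    unfolding risk_def Eq
    by (rule sum.cong) (auto simp: HTe)
  have Euu: "(\<Sum>S\<in>P. w S * (uu q k S * uu q l S)) =
      (\<Sum>S\<in>P. w S * ((if k \<in> S then 1 else 0) * (if l \<in> S then 1 else 0))) / (q k * q l) - 1"
    if "k \<in> K" "l \<in> K" for k l
    by (rule Euu2_gen[OF w1 pi qpos[OF that(1)] qpos[OF that(2)]])
  have HTunb: "unbiased N a b p HT"
    unfolding unbiased_def
  proof
    fix y assume "y \<in> Theta N a b"
    have "measure_pmf.expectation p (\<lambda>S. HT S y) = (\<Sum>S\<in>P. w S * (total N y + (\<Sum>k\<in>K. (y k - m k) * uu q k S)))"
      unfolding Eq by (rule sum.cong) (auto simp: HTe)
    also have "\<dots> = total N y * (\<Sum>S\<in>P. w S) + (\<Sum>S\<in>P. \<Sum>k\<in>K. (y k - m k) * (w S * uu q k S))"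
      by (simp add: distrib_left sum.distrib sum_distrib_left sum_distrib_right mult_ac)
    also have "(\<Sum>S\<in>P. \<Sum>k\<in>K. (y k - m k) * (w S * uu q k S)) = (\<Sum>k\<in>K. \<Sum>S\<in>P. (y k - m k) * (w S * uu q k S))"
      by (rule sum.swap)
    also have "total N y * (\<Sum>S\<in>P. w S) + (\<Sum>k\<in>K. \<Sum>S\<in>P. (y k - m k) * (w S * uu q k S)) =
       total N y + (\<Sum>k\<in>K. (y k - m k) * (\<Sum>S\<in>P. w S * uu q k S))"
      by (simp add: w1 sum_distrib_left)
    also have "\<dots> = total N y"
      by (simp add: Eu_gen[OF w1 pi qpos])
    finally show "measure_pmf.expectation p (\<lambda>S. HT S y) = total N y" .
  qed
  have HTest: "is_estimator N a b HT"
    unfolding is_estimator_def HT_def HT_mid_def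
    by (auto intro!: measurable_restrict_space1)
  have i_iii: "\<forall>i\<in>{1..N}. \<forall>j\<in>{1..N}. i \<noteq> j \<longrightarrow> joint_incl_prob p i j - q i * q j = 0"
    if "\<exists>\<delta>. is_estimator N a b \<delta> \<and> unbiased N a b p \<delta> \<and> max_risk N a b \<delta> p = ereal D"
  proof (intro ballI impI)
    fix i j assume ij: "i \<in> {1..N}" "j \<in> {1..N}" "i \<noteq> j"
    from that obtain \<delta> where est: "is_estimator N a b \<delta>" and unb: "unbiased N a b p \<delta>"
      and mr: "max_risk N a b \<delta> p = ereal D" by blast
    define y where "y \<sigma> = (\<lambda>k. m k + \<sigma> k * r k)" for \<sigma> :: "nat \<Rightarrow> real"
    define c where "c = (\<Sum>k\<in>K. m k)"
    have yT: "y \<sigma> \<in> Theta N a b" if s: "\<sigma> \<in> SV K" for \<sigma>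
      unfolding Theta_def
    proof (intro CollectI ballI)
      fix k assume k: "k \<in> {1..N}"
      then have "\<sigma> k = -1 \<or> \<sigma> k = 1" using s by (auto simp: PiE_iff K_def)
      then show "a k \<le> y \<sigma> k \<and> y \<sigma> k \<le> b k"
        using assms(2)[OF k] by (auto simp: y_def m_def r_def field_simps)
    qed
    have tot: "total N (y \<sigma>) = c + (\<Sum>k\<in>K. \<sigma> k * r k)" for \<sigma>
      unfolding total_def y_def c_def K_def by (simp add: sum.distrib)
    have iK: "i \<in> K" "j \<in> K" using ij by (auto simp: K_def)
    have piK: "\<And>k. k \<in> K \<Longrightarrow> q k = (\<Sum>S\<in>P. w S * (if k \<in> S then 1 else 0))" using pi by blast
    have "(\<Sum>S\<in>P. w S * ((if i \<in> S then 1 else 0) * (if j \<in> S then 1 else 0))) = q i * q j"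
    proof (rule core[OF fK fP w0 w1 piK qpos rpos _ _ _ iK ij(3), where d="\<lambda>S \<sigma>. \<delta> S (y \<sigma>)" and c=c])
      show "(\<Sum>S\<in>P. w S * \<delta> S (y \<sigma>)) = c + (\<Sum>k\<in>K. \<sigma> k * r k)" if s: "\<sigma> \<in> SV K" for \<sigma>
      proof -
        have "measure_pmf.expectation p (\<lambda>S. \<delta> S (y \<sigma>)) = total N (y \<sigma>)"
          using unb yT[OF s] unfolding unbiased_def by blast
        then show ?thesis unfolding Eq tot .
      qed
      show "\<delta> S (y (flip k \<sigma>)) = \<delta> S (y \<sigma>)" if "S \<in> P" "\<sigma> \<in> SV K" "k \<in> K" "k \<notin> S" for S \<sigma> k
      proof -
        have "S \<subseteq> {1..N}" using that by (simp add: P_def K_def)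
        moreover have "\<forall>l\<in>S. y (flip k \<sigma>) l = y \<sigma> l" using that by (auto simp: y_def flip_def)
        ultimately show ?thesis using est unfolding is_estimator_def by blast
      qed
      show "(\<Sum>S\<in>P. w S * (\<delta> S (y \<sigma>) - (c + (\<Sum>k\<in>K. \<sigma> k * r k)))\<^sup>2) \<le> (\<Sum>k\<in>K. (r k)\<^sup>2 * (1 - q k) / q k)"
        if s: "\<sigma> \<in> SV K" for \<sigma>
      proof -
        have "ereal (risk N \<delta> p (y \<sigma>)) \<le> max_risk N a b \<delta> p"
          unfolding max_risk_def by (rule SUP_upper[OF yT[OF s]])
        then have "risk N \<delta> p (y \<sigma>) \<le> D" using mr by simp
        then show ?thesis unfolding risk_def Eq tot Ddef .
      qed
    qed
    then show "joint_incl_prob p i j - q i * q j = 0" by (simp add: jt)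
  qed
  have iii_ii: "max_risk N a b HT p = ereal D"
    if off: "\<forall>i\<in>{1..N}. \<forall>j\<in>{1..N}. i \<noteq> j \<longrightarrow> joint_incl_prob p i j - q i * q j = 0"
  proof -
    have Eoff: "(\<Sum>S\<in>P. w S * (uu q k S * uu q l S)) = (if k = l then 1 / q k - 1 else 0)"
      if kl: "k \<in> K" "l \<in> K" for k l
    proof (cases "k = l")
      case True
      have "(\<Sum>S\<in>P. w S * ((if k \<in> S then 1 else 0) * (if l \<in> S then 1 else 0))) = q k"
        unfolding pi True by (rule sum.cong) auto
      then show ?thesis using Euu[OF kl] True qpos[OF kl(1)] by simp
    next
      case False
      have "(\<Sum>S\<in>P. w S * ((if k \<in> S then 1 else 0) * (if l \<in> S then 1 else 0))) = q k * q l"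
        using off kl False jt unfolding K_def by simp
      then show ?thesis using Euu[OF kl] False qpos[OF kl(1)] qpos[OF kl(2)] by simp
    qed
    have rform: "risk N HT p y = (\<Sum>k\<in>K. (y k - m k)\<^sup>2 * (1 / q k - 1))" for y
    proof -
      have "risk N HT p y = (\<Sum>k\<in>K. \<Sum>l\<in>K. (y k - m k) * (y l - m l) * (\<Sum>S\<in>P. w S * (uu q k S * uu q l S)))"
        unfolding riskHT by (rule quad_exp)
      also have "\<dots> = (\<Sum>k\<in>K. \<Sum>l\<in>K. if l = k then (y k - m k)\<^sup>2 * (1 / q k - 1) else 0)"
        by (intro sum.cong refl) (auto simp: Eoff power2_eq_square)
      also have "\<dots> = (\<Sum>k\<in>K. (y k - m k)\<^sup>2 * (1 / q k - 1))"
        using fK by simp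
      finally show ?thesis .
    qed
    have bT: "b \<in> Theta N a b" unfolding Theta_def using assms(2) by auto
    have rb: "risk N HT p b = D" unfolding rform Dalt
      by (rule sum.cong) (auto simp: m_def r_def field_simps)
    have rle: "risk N HT p y \<le> D" if yT: "y \<in> Theta N a b" for y
      unfolding rform Dalt
    proof (rule sum_mono)
      fix k assume k: "k \<in> K"
      have "0 \<le> (r k - (y k - m k)) * (r k + (y k - m k))"
        using yT k by (intro mult_nonneg_nonneg) (auto simp: Theta_def K_def r_def m_def field_simps)
      then have "(y k - m k)\<^sup>2 \<le> (r k)\<^sup>2" by (simp add: power2_eq_square algebra_simps)
      moreover have "0 \<le> 1 / q k - 1" using qpos[OF k] q1[of k] by (simp add: field_simps)
      ultimately show "(y k - m k)\<^sup>2 * (1 / q k - 1) \<le> (r k)\<^sup>2 * (1 / q k - 1)"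
        by (rule mult_right_mono)
    qed
    show ?thesis unfolding max_risk_def
    proof (rule antisym)
      show "(SUP y\<in>Theta N a b. ereal (risk N HT p y)) \<le> ereal D"
        by (rule SUP_least) (simp add: rle)
      show "ereal D \<le> (SUP y\<in>Theta N a b. ereal (risk N HT p y))"
        by (rule SUP_upper2[OF bT]) (simp add: rb)
    qed
  qed
  have ii_i: "\<exists>\<delta>. is_estimator N a b \<delta> \<and> unbiased N a b p \<delta> \<and> max_risk N a b \<delta> p = ereal D"
    if "max_risk N a b HT p = ereal D"
    using HTest HTunb that by blast
  show ?thesis using i_iii iii_ii ii_i unfolding HT_def D_def q_def by blast
qed

end
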